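(* Let $(X,\mathcal{X},\mu)$ be a probability space, let $(Y,\mathcal{Y})$ be a measurable space, and let $f\colon X\to Y$ be a measurable function with output probability measure $\mu_f\colon\mathcal{Y}\to[0,1]$, $\mu_f=\mu\circ\mathit{pre}_f$. Let $\mathit{img}^\sharp_f\colon\wp(X)\to\wp(Y)$ be a function with $\mathit{img}_f(S)\subseteq\mathit{img}^\sharp_f(S)$ for all $S\subseteq X$, let $T$ be a finite partition of $X$, and let $\uparrow\colon\wp(X)\to\mathcal{X}$ be a monotone abstraction. For $A\subseteq Y$ define $$\mathit{pre}'^\sharp_f[T](A)\;=\;\uparrow\Big(\bigcup\{t\in T\mid \mathit{img}^\sharp_f(t)\cap A\neq\emptyset\}\Big),\qquad \mathit{pre}'^\flat_f[T](A)\;=\;X\setminus \mathit{pre}'^\sharp_f[T](Y\setminus A),$$ and $\mu^\sharp_f=\mu\circ\mathit{pre}'^\sharp_f[T]$, $\mu^\flat_f=\mu\circ\mathit{pre}'^\flat_f[T]$. Then for all $A\in\mathcal{Y}$: (i) $\mu^\flat_f(A)\le\mu_f(A)\le\mu^\sharp_f(A)$; (ii) $\mu^\flat_f(A)=1-\mu^\sharp_f(Y\setminus A)$; and (iii) $\mu^\flat_f$ and $\mu^\sharp_f$ are monotone (i.e. $A\subseteq B$ implies $\mu^\flat_f(A)\le\mu^\flat_f(B)$ and $\mu^\sharp_f(A)\le\mu^\sharp_f(B)$).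
   Context: For a function $f\colon X\to Y$: the pre-image function is $\mathit{pre}_f(B)=\{x\in X\mid f(x)\in B\}$ for $B\subseteq Y$, and the image function is $\mathit{img}_f(S)=\{f(x)\mid x\in S\}$ for $S\subseteq X$. $f$ is measurable from $(X,\mathcal{X})$ to $(Y,\mathcal{Y})$ if $\mathit{pre}_f(B)\in\mathcal{X}$ for every $B\in\mathcal{Y}$. A partition of $X$ is a set of nonempty pairwise disjoint subsets of $X$ whose union is $X$. An abstraction is a function $\uparrow\colon\wp(X)\to\mathcal{X}$ with $S\subseteq\,\uparrow(S)$ for all $S\subseteq X$; it is monotone if $S\subseteq S'$ implies $\uparrow(S)\subseteq\,\uparrow(S')$. *)

theory Defs
  imports "HOL-Probability.Probability"
begin

definition is_partition :: "'a set \<Rightarrow> 'a set set \<Rightarrow> bool" where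
  "is_partition X T \<longleftrightarrow> (\<forall>t\<in>T. t \<noteq> {}) \<and> pairwise disjnt T \<and> \<Union>T = X"

definition is_abstraction :: "'a measure \<Rightarrow> ('a set \<Rightarrow> 'a set) \<Rightarrow> bool" where
  "is_abstraction M up \<longleftrightarrow> (\<forall>S. S \<subseteq> space M \<longrightarrow> up S \<in> sets M \<and> S \<subseteq> up S)"

definition mono_abstraction :: "'a measure \<Rightarrow> ('a set \<Rightarrow> 'a set) \<Rightarrow> bool" where
  "mono_abstraction M up \<longleftrightarrow>
     (\<forall>S S'. S \<subseteq> S' \<and> S' \<subseteq> space M \<longrightarrow> up S \<subseteq> up S')"

definition pre_sharp :: "('a set \<Rightarrow> 'a set) \<Rightarrow> ('a set \<Rightarrow> 'b set) \<Rightarrow> 'a set set \<Rightarrow> 'b set \<Rightarrow> 'a set" where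
  "pre_sharp up img T A = up (\<Union>{t\<in>T. img t \<inter> A \<noteq> {}})"

definition pre_flat :: "'a measure \<Rightarrow> 'b measure \<Rightarrow> ('a set \<Rightarrow> 'a set) \<Rightarrow> ('a set \<Rightarrow> 'b set) \<Rightarrow> 'a set set \<Rightarrow> 'b set \<Rightarrow> 'a set" where
  "pre_flat M N up img T A = space M - pre_sharp up img T (space N - A)"

definition mu_sharp :: "'a measure \<Rightarrow> ('a set \<Rightarrow> 'a set) \<Rightarrow> ('a set \<Rightarrow> 'b set) \<Rightarrow> 'a set set \<Rightarrow> 'b set \<Rightarrow> real" where
  "mu_sharp M up img T A = measure M (pre_sharp up img T A)"

definition mu_flat :: "'a measure \<Rightarrow> 'b measure \<Rightarrow> ('a set \<Rightarrow> 'a set) \<Rightarrow> ('a set \<Rightarrow> 'b set) \<Rightarrow> 'a set set \<Rightarrow> 'b set \<Rightarrow> real" where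
  "mu_flat M N up img T A = measure M (pre_flat M N up img T A)"

definition mu_out :: "'a measure \<Rightarrow> ('a \<Rightarrow> 'b) \<Rightarrow> 'b set \<Rightarrow> real" where
  "mu_out M f B = measure M {x \<in> space M. f x \<in> B}"

end

theory Submission
  imports Defs
begin

theorem theorem3:
  fixes M :: "'a measure" and N :: "'b measure" and f :: "'a \<Rightarrow> 'b"
    and img :: "'a set \<Rightarrow> 'b set" and T :: "'a set set" and up :: "'a set \<Rightarrow> 'a set"
  assumes "prob_space M"
    and "f \<in> measurable M N"
    and "\<forall>S. S \<subseteq> space M \<longrightarrow> f ` S \<subseteq> img S"
    and "finite T" and "is_partition (space M) T"
    and "is_abstraction M up" and "mono_abstraction M up"
  shows "(\<forall>A \<in> sets N. mu_flat M N up img T A \<le> mu_out M f A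
                       \<and> mu_out M f A \<le> mu_sharp M up img T A)
       \<and> (\<forall>A \<in> sets N. mu_flat M N up img T A = 1 - mu_sharp M up img T (space N - A))
       \<and> (\<forall>A B. A \<subseteq> B \<and> B \<subseteq> space N \<longrightarrow>
              mu_flat M N up img T A \<le> mu_flat M N up img T B
            \<and> mu_sharp M up img T A \<le> mu_sharp M up img T B)"
proof -
  interpret P: prob_space M by fact
  have U: "\<Union>T = space M" using assms(5) by (simp add: is_partition_def)
  have sub: "\<Union>{t\<in>T. img t \<inter> A \<noteq> {}} \<subseteq> space M" for A using U by blast
  have psets: "pre_sharp up img T A \<in> sets M" for A
    using assms(6) sub unfolding is_abstraction_def pre_sharp_def by blast
  have pfsets: "pre_flat M N up img T A \<in> sets M" for A
    unfolding pre_flat_def using psets by blast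
  have pmono: "pre_sharp up img T A \<subseteq> pre_sharp up img T B" if "A \<subseteq> B" for A B
  proof -
    have "\<Union>{t\<in>T. img t \<inter> A \<noteq> {}} \<subseteq> \<Union>{t\<in>T. img t \<inter> B \<noteq> {}}" using that by blast
    then show ?thesis using assms(7) sub unfolding mono_abstraction_def pre_sharp_def by blast
  qed
  have pre_in: "{x \<in> space M. f x \<in> A} \<subseteq> pre_sharp up img T A" for A
  proof
    fix x assume x: "x \<in> {x \<in> space M. f x \<in> A}"
    then obtain t where t: "t \<in> T" "x \<in> t" using U by blast
    have "t \<subseteq> space M" using t U by blast
    then have "f x \<in> img t" using assms(3) t by blast
    then have "x \<in> \<Union>{t\<in>T. img t \<inter> A \<noteq> {}}" using x t by blast
    moreover have "\<Union>{t\<in>T. img t \<inter> A \<noteq> {}} \<subseteq> pre_sharp up img T A"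
      using assms(6) sub unfolding is_abstraction_def pre_sharp_def by blast
    ultimately show "x \<in> pre_sharp up img T A" by blast
  qed
  have fsub: "pre_flat M N up img T A \<subseteq> {x \<in> space M. f x \<in> A}" for A
  proof
    fix x assume x: "x \<in> pre_flat M N up img T A"
    then have xs: "x \<in> space M" and nx: "x \<notin> pre_sharp up img T (space N - A)"
      unfolding pre_flat_def by auto
    have "f x \<in> space N" using assms(2) xs by (auto simp: measurable_def)
    then show "x \<in> {x \<in> space M. f x \<in> A}" using pre_in[of "space N - A"] xs nx by blast
  qed
  have part1: "\<forall>A \<in> sets N. mu_flat M N up img T A \<le> mu_out M f A
                       \<and> mu_out M f A \<le> mu_sharp M up img T A"
  proof
    fix A assume A: "A \<in> sets N"
    have m: "{x \<in> space M. f x \<in> A} \<in> sets M" using measurable_sets[OF assms(2) A]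
      by (simp add: vimage_def Int_def conj_commute)
    show "mu_flat M N up img T A \<le> mu_out M f A \<and> mu_out M f A \<le> mu_sharp M up img T A"
      unfolding mu_flat_def mu_out_def mu_sharp_def
      using P.finite_measure_mono[OF fsub m] P.finite_measure_mono[OF pre_in psets] by (rule conjI)
  qed
  have part2: "\<forall>A \<in> sets N. mu_flat M N up img T A = 1 - mu_sharp M up img T (space N - A)"
    unfolding mu_flat_def mu_sharp_def pre_flat_def using P.prob_compl[OF psets] by blast
  have part3: "\<forall>A B. A \<subseteq> B \<and> B \<subseteq> space N \<longrightarrow>
              mu_flat M N up img T A \<le> mu_flat M N up img T B
            \<and> mu_sharp M up img T A \<le> mu_sharp M up img T B"
  proof (intro allI impI conjI)
    fix A B assume h: "A \<subseteq> B \<and> B \<subseteq> space N"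
    have "pre_sharp up img T (space N - B) \<subseteq> pre_sharp up img T (space N - A)"
      using h by (intro pmono) blast
    then have "pre_flat M N up img T A \<subseteq> pre_flat M N up img T B"
      unfolding pre_flat_def by blast
    then show "mu_flat M N up img T A \<le> mu_flat M N up img T B"
      unfolding mu_flat_def by (rule P.finite_measure_mono[OF _ pfsets])
    show "mu_sharp M up img T A \<le> mu_sharp M up img T B"
      unfolding mu_sharp_def using h by (intro P.finite_measure_mono[OF pmono psets]) simp
  qed
  show ?thesis using part1 part2 part3 by blast
qed

end
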